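(* Let $R$ be an involutive commutative semiring (with $0 \neq 1$), let $(K,\oplus,0)$ be a finite abelian group of order $d$ and exponent $k$, with $d$ invertible in $R$, and let $K$ be a subgroup of an abelian group $(P,\oplus,0)$ (in the paper: $K$ is the group of $X$-classical points, $P$ the group of $Z$-phases). Let $$\bigoplus_{r=1}^M n_r y_r = a, \qquad a \in K,$$ be an equation with positive integer coefficients $n_r$, admitting a solution $y_r := a_r$ in $P$, where the $a_r$ are pairwise distinct and non-zero. Choose $N \geq \sum_{r=1}^M n_r$ with $N \equiv 1 \pmod k$, set $n_0 := N - \sum_{r=1}^M n_r$, $a_0 := 0$, for $i = 1,\dots,N$ let $R(i)$ be the least $R' \geq 0$ with $i \leq \sum_{r=0}^{R'} n_r$, and put $\alpha_i := a_{R(i)}$; indices of $\alpha$ are read modulo $N$ with residues in $\{1,\dots,N\}$. Consider the measurement scenario with measurements $\mathcal{X} = \bigsqcup_{i=1}^N \{X_i^{0}, X_i^{a_1},\dots,X_i^{a_M}\}$, each with outcome set $K$, and measurement contexts $C_{control} = \{X_i^0 : i = 1,\dots,N\}$ and $C_{var_v} = \{X_i^{\alpha_{i+v-1}} : i=1,\dots,N\}$ for $v = 1,\dots,N$. Let $(e_C)$ be the $R$-valued empirical model (the outcome distribution of the Mermin measurement contexts on the $N$-partite GHZ state) given, for $\underline{b} \in K^C$, by $e_{C_{control}}(\underline{b}) = 1/d^{N-1}$ if $\bigoplus_{i} b_i = 0$ and $0$ otherwise, and $e_{C_{var_v}}(\underline{b}) = 1/d^{N-1}$ if $\bigoplus_i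 b_i = a$ and $0$ otherwise. Assume $R$ admits a semiring morphism $p: R \to \mathbb{B}$ with $p(1/d) = 1$. Then $(e_C)$ is $\mathrm{AvN}_{\mathbb{Z},K}$ if and only if the equation $\bigoplus_{r=1}^M n_r y_r = a$ admits no solution in $K$.
   Context: $\mathbb{B} = (\{0,1\},\vee,0,\wedge,1)$ is the boolean semiring. The possibilistic model associated with $(e_C)$ is $(p\circ e_C)$; its support on a context $C$ is $\mathcal{S}(C) := \{\underline{b} \in K^C : p(e_C(\underline{b})) = 1\}$. A $\mathbb{Z}$-linear equation valued in $K$ is a triple $\phi = (C, n, b)$ with $C$ a finite set, $n: C \to \mathbb{Z}$ and $b \in K$; an assignment $s: C \to K$ satisfies $\phi$ if $\bigoplus_{m \in C} n(m) s(m) = b$ in $K$. For a set $W$ of assignments $C \to K$, $\mathbb{T}_{\mathbb{Z}}(W)$ is the set of $\mathbb{Z}$-linear equations with index set $C$ satisfied by every $s \in W$. The model is $\mathrm{AvN}_{\mathbb{Z},K}$ (All-vs-Nothing) if there is no global assignment $s: \mathcal{X} \to K$ such that, for every context $C$ and every $\phi \in \mathbb{T}_{\mathbb{Z}}(\mathcal{S}(C))$, the restriction $s|_C$ satisfies $\phi$. *)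

theory Defs
  imports Main "HOL-Library.FuncSet"
begin

definition natmult :: "nat \<Rightarrow> 'a::monoid_add \<Rightarrow> 'a" where
  "natmult m x = (((+) x) ^^ m) 0"

definition intmult :: "int \<Rightarrow> 'a::ab_group_add \<Rightarrow> 'a" where
  "intmult z x = (if 0 \<le> z then natmult (nat z) x else - natmult (nat (- z)) x)"

definition is_subgroup :: "'a::ab_group_add set \<Rightarrow> bool" where
  "is_subgroup K \<longleftrightarrow> 0 \<in> K \<and> (\<forall>x\<in>K. \<forall>y\<in>K. x + y \<in> K) \<and> (\<forall>x\<in>K. - x \<in> K)"

definition group_exponent :: "'a::ab_group_add set \<Rightarrow> nat" where
  "group_exponent K = (LEAST k. 0 < k \<and> (\<forall>x\<in>K. natmult k x = 0))"

definition involutive_semiring :: "('r::comm_semiring_1 \<Rightarrow> 'r) \<Rightarrow> bool" where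
  "involutive_semiring invol \<longleftrightarrow>
     (\<forall>x. invol (invol x) = x) \<and> (\<forall>x y. invol (x + y) = invol x + invol y) \<and>
     (\<forall>x y. invol (x * y) = invol x * invol y) \<and> invol 0 = 0 \<and> invol 1 = 1"

definition bool_semiring_hom :: "('r::comm_semiring_1 \<Rightarrow> bool) \<Rightarrow> bool" where
  "bool_semiring_hom p \<longleftrightarrow> p 0 = False \<and> p 1 = True \<and>
     (\<forall>x y. p (x + y) = (p x \<or> p y)) \<and> (\<forall>x y. p (x * y) = (p x \<and> p y))"

definition sat_eq :: "'m set \<Rightarrow> ('m \<Rightarrow> int) \<Rightarrow> 'p::ab_group_add \<Rightarrow> ('m \<Rightarrow> 'p) \<Rightarrow> bool" where
  "sat_eq C n b s \<longleftrightarrow> (\<Sum>m\<in>C. intmult (n m) (s m)) = b"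

definition T_Z :: "'p::ab_group_add set \<Rightarrow> 'm set \<Rightarrow> ('m \<Rightarrow> 'p) set \<Rightarrow> (('m \<Rightarrow> int) \<times> 'p) set" where
  "T_Z K C W = {(n, b). n \<in> extensional C \<and> b \<in> K \<and> (\<forall>s\<in>W. sat_eq C n b s)}"

definition support :: "('r \<Rightarrow> bool) \<Rightarrow> 'p set \<Rightarrow> 'm set \<Rightarrow> (('m \<Rightarrow> 'p) \<Rightarrow> 'r) \<Rightarrow> ('m \<Rightarrow> 'p) set" where
  "support p K C eC = {b \<in> C \<rightarrow>\<^sub>E K. p (eC b)}"

text \<open>AvN_{Z,K}: contexts are labelled by Cs, ctx gives the measurement set of each
  context, e gives the empirical model on each context.\<close>
definition AvN_ZK :: "'p::ab_group_add set \<Rightarrow> 'm set \<Rightarrow> 'c set \<Rightarrow> ('c \<Rightarrow> 'm set)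
    \<Rightarrow> ('c \<Rightarrow> ('m \<Rightarrow> 'p) \<Rightarrow> 'r) \<Rightarrow> ('r \<Rightarrow> bool) \<Rightarrow> bool" where
  "AvN_ZK K X Cs ctx e p \<longleftrightarrow>
     \<not> (\<exists>s \<in> X \<rightarrow>\<^sub>E K. \<forall>c\<in>Cs. \<forall>(n, b) \<in> T_Z K (ctx c) (support p K (ctx c) (e c)).
            sat_eq (ctx c) n b (restrict s (ctx c)))"

definition nn :: "nat \<Rightarrow> nat \<Rightarrow> (nat \<Rightarrow> nat) \<Rightarrow> nat \<Rightarrow> nat" where
  "nn N M n r = (if r = 0 then N - (\<Sum>s=1..M. n s) else n r)"

definition Ridx :: "nat \<Rightarrow> nat \<Rightarrow> (nat \<Rightarrow> nat) \<Rightarrow> nat \<Rightarrow> nat" where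
  "Ridx N M n i = (LEAST R'. i \<le> (\<Sum>r=0..R'. nn N M n r))"

definition alpha :: "nat \<Rightarrow> nat \<Rightarrow> (nat \<Rightarrow> nat) \<Rightarrow> (nat \<Rightarrow> 'p::zero) \<Rightarrow> nat \<Rightarrow> 'p" where
  "alpha N M n as i = (if Ridx N M n i = 0 then 0 else as (Ridx N M n i))"

text \<open>Index read modulo N with residues in {1..N} (for j >= 1).\<close>
definition alpha_mod :: "nat \<Rightarrow> nat \<Rightarrow> (nat \<Rightarrow> nat) \<Rightarrow> (nat \<Rightarrow> 'p::zero) \<Rightarrow> nat \<Rightarrow> 'p" where
  "alpha_mod N M n as j = alpha N M n as ((j - 1) mod N + 1)"

text \<open>Measurement X_i^c is represented by the pair (i, c).\<close>
definition meas :: "nat \<Rightarrow> nat \<Rightarrow> (nat \<Rightarrow> 'p::zero) \<Rightarrow> (nat \<times> 'p) set" where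
  "meas N M as = {1..N} \<times> ({0} \<union> as ` {1..M})"

datatype mctx = Control | Var nat

definition ctxs :: "nat \<Rightarrow> mctx set" where
  "ctxs N = insert Control (Var ` {1..N})"

definition ctx :: "nat \<Rightarrow> nat \<Rightarrow> (nat \<Rightarrow> nat) \<Rightarrow> (nat \<Rightarrow> 'p::zero) \<Rightarrow> mctx \<Rightarrow> (nat \<times> 'p) set" where
  "ctx N M n as c = (case c of
      Control \<Rightarrow> {(i, 0) | i. i \<in> {1..N}}
    | Var v \<Rightarrow> {(i, alpha_mod N M n as (i + v - 1)) | i. i \<in> {1..N}})"

text \<open>The empirical model: dinv stands for 1/d; b is summed over the context.\<close>
definition emp :: "nat \<Rightarrow> nat \<Rightarrow> (nat \<Rightarrow> nat) \<Rightarrow> (nat \<Rightarrow> 'p::ab_group_add) \<Rightarrow> 'p \<Rightarrow> 'r::comm_semiring_1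
     \<Rightarrow> mctx \<Rightarrow> ((nat \<times> 'p) \<Rightarrow> 'p) \<Rightarrow> 'r" where
  "emp N M n as a dinv c b =
     (if (\<Sum>m\<in>ctx N M n as c. b m) = (case c of Control \<Rightarrow> 0 | Var v \<Rightarrow> a)
      then dinv ^ (N - 1) else 0)"

end

theory Submission imports Defs begin

lemma natmult_0[simp]: "natmult 0 x = 0" by (simp add: natmult_def)
lemma natmult_Suc[simp]: "natmult (Suc m) x = x + natmult m x" by (simp add: natmult_def)
lemma natmult_add: "natmult (a+b) (x::'a::comm_monoid_add) = natmult a x + natmult b x"
  by (induct a) (simp_all add: add.assoc)
lemma natmult_zero[simp]: "natmult m (0::'a::monoid_add) = 0" by (induct m) simp_all
lemma natmult_sum: "natmult m (\<Sum>i\<in>A. f i) = (\<Sum>i\<in>A. natmult m (f i :: 'a::comm_monoid_add))"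
  by (induct m) (simp_all add: sum.distrib)
lemma natmult_mult: "natmult (a*b) (x::'a::comm_monoid_add) = natmult a (natmult b x)"
  by (induct a) (simp_all add: natmult_add)
lemma natmult_one[simp]: "natmult 1 x = x" by (simp add: natmult_def)
lemma sum_const_natmult: "finite A \<Longrightarrow> (\<Sum>i\<in>A. (c::'a::comm_monoid_add)) = natmult (card A) c"
  by (induct A rule: finite_induct) simp_all
lemma intmult_one[simp]: "intmult 1 x = x" by (simp add: intmult_def)

lemma natmult_in: "is_subgroup K \<Longrightarrow> x \<in> K \<Longrightarrow> natmult m x \<in> K"
  by (induct m) (auto simp: is_subgroup_def)
lemma sum_in: assumes "is_subgroup K" "\<forall>i\<in>A. f i \<in> K" shows "sum f A \<in> K"
proof (cases "finite A")
  case True then show ?thesis using assms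
    by (induct A rule: finite_induct) (auto simp: is_subgroup_def)
next
  case False then show ?thesis using assms by (simp add: is_subgroup_def)
qed

lemma elem_order:
  assumes K: "finite K" "is_subgroup K" and x: "x \<in> K"
  shows "\<exists>d. 1 \<le> d \<and> d \<le> card K \<and> natmult d x = 0"
proof -
  have "(\<lambda>m. natmult m x) ` {0..card K} \<subseteq> K" using natmult_in[OF K(2) x] by auto
  moreover have "card K < card {0..card K}" by simp
  ultimately have "\<not> inj_on (\<lambda>m. natmult m x) {0..card K}"
    using card_inj_on_le[OF _ _ K(1)] by fastforce
  then obtain i j where ij: "i \<in> {0..card K}" "j \<in> {0..card K}" "i < j" "natmult i x = natmult j x"
    unfolding inj_on_def by (metis linorder_neqE_nat)
  have "natmult j x = natmult i x + natmult (j - i) x"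
    using natmult_add[of i "j-i" x] ij(3) by simp
  then have "natmult (j-i) x = 0" using ij(4) by simp
  then show ?thesis using ij by (intro exI[of _ "j-i"]) auto
qed

lemma exponent_ex:
  assumes K: "finite K" "is_subgroup K"
  shows "\<exists>k. 0 < k \<and> (\<forall>x\<in>K. natmult k x = 0)"
proof (intro exI[of _ "fact (card K)"] conjI ballI)
  show "0 < (fact (card K)::nat)" by simp
  fix x assume x: "x \<in> K"
  obtain d where d: "1 \<le> d" "d \<le> card K" "natmult d x = 0" using elem_order[OF K x] by blast
  then obtain q where "fact (card K) = q * d" using dvd_fact[OF d(1) d(2)] by (auto simp: dvd_def mult.commute)
  then show "natmult (fact (card K)) x = 0" using d(3) by (simp add: natmult_mult)
qed

lemma natmult_N:
  assumes K: "finite K" "is_subgroup K" and a: "a \<in> K"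
    and N: "N mod group_exponent K = 1 mod group_exponent K"
  shows "natmult N a = a"
proof -
  define k where "k = group_exponent K"
  have k: "0 < k" "\<forall>x\<in>K. natmult k x = 0"
    using LeastI_ex[OF exponent_ex[OF K]] unfolding k_def group_exponent_def by auto
  have "natmult N a = natmult ((N div k) * k) a + natmult (N mod k) a"
    by (metis natmult_add div_mult_mod_eq)
  also have "\<dots> = natmult (N mod k) a" using k a by (simp add: natmult_mult)
  also have "\<dots> = a"
  proof (cases "k = 1")
    case True then show ?thesis using k a by (metis mod_by_1 natmult_0 natmult_one)
  next
    case False then have "1 mod k = 1" using k by simp
    then show ?thesis using N k_def by simp
  qed
  finally show ?thesis .
qed


lemma modinj: assumes "(i + c) mod N = (j + c) mod (N::nat)" "i < N" "j < N" shows "i = j"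
proof -
  have *: "\<And>i j. i \<le> j \<Longrightarrow> (i + c) mod N = (j + c) mod (N::nat) \<Longrightarrow> j < N \<Longrightarrow> i = j"
  proof -
    fix i j :: nat assume h: "i \<le> j" "(i + c) mod N = (j + c) mod N" "j < N"
    then have "N dvd (j + c) - (i + c)" using mod_eq_dvd_iff_nat[of "i+c" "j+c" N] by simp
    then have "N dvd j - i" by simp
    moreover have "j - i < N" using h by simp
    ultimately have "j - i = 0" using dvd_imp_le not_le by blast
    then show "i = j" using h by simp
  qed
  show ?thesis using *[of i j] *[of j i] assms by (cases "i \<le> j") auto
qed

lemma cyc0:
  fixes H :: "nat \<Rightarrow> 'a::comm_monoid_add"
  shows "(\<Sum>i<N. H ((i + c) mod N)) = (\<Sum>i<N. H i)"
proof (cases "N = 0")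
  case True then show ?thesis by simp
next
  case False
  let ?s = "\<lambda>i. (i + c) mod N"
  have inj: "inj_on ?s {..<N}"
    unfolding inj_on_def using modinj by blast
  have "?s ` {..<N} \<subseteq> {..<N}" using False by auto
  then have im: "?s ` {..<N} = {..<N}" using endo_inj_surj[OF _ _ inj] by simp
  have "(\<Sum>i<N. H i) = sum H (?s ` {..<N})" using im by simp
  also have "\<dots> = (\<Sum>i<N. H ((i + c) mod N))" using sum.reindex[OF inj] by simp
  finally show ?thesis by simp
qed

lemma cyc1:
  fixes G :: "'p::zero \<Rightarrow> 'a::comm_monoid_add"
  assumes "1 \<le> v"
  shows "(\<Sum>i=1..N. G (alpha_mod N M n as (i + v - 1))) = (\<Sum>j=1..N. G (alpha N M n as j))"
proof -
  have "(\<Sum>i=1..N. G (alpha_mod N M n as (i + v - 1))) = (\<Sum>k<N. G (alpha_mod N M n as (Suc k + v - 1)))"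
    by (simp only: One_nat_def sum.atLeast1_atMost_eq)
  also have "\<dots> = (\<Sum>k<N. G (alpha N M n as (Suc ((k + (v - 1)) mod N))))"
    using assms by (intro sum.cong) (auto simp: alpha_mod_def)
  also have "\<dots> = (\<Sum>k<N. G (alpha N M n as (Suc k)))"
    by (rule cyc0[where H = "\<lambda>i. G (alpha N M n as (Suc i))"])
  also have "\<dots> = (\<Sum>j=1..N. G (alpha N M n as j))"
    by (simp only: One_nat_def sum.atLeast1_atMost_eq)
  finally show ?thesis .
qed

lemma ridx_block:
  fixes h :: "nat \<Rightarrow> 'a::comm_monoid_add"
  shows "(\<Sum>j=1..(\<Sum>r=0..R. nn N M n r). h (Ridx N M n j)) = (\<Sum>r=0..R. natmult (nn N M n r) (h r))"
proof (induct R)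
  case 0
  have "(\<Sum>j=1..nn N M n 0. h (Ridx N M n j)) = (\<Sum>j=1..nn N M n 0. h 0)"
    by (intro sum.cong) (auto simp: Ridx_def intro!: Least_eq_0)
  then show ?case by (simp add: sum_const_natmult)
next
  case (Suc R)
  let ?S = "\<lambda>R. (\<Sum>r=0..R. nn N M n r)"
  have mono: "\<And>y. y \<le> R \<Longrightarrow> ?S y \<le> ?S R"
    by (intro sum_mono2) auto
  have SS: "?S (Suc R) = ?S R + nn N M n (Suc R)" by simp
  have "(\<Sum>j=1..?S (Suc R). h (Ridx N M n j)) =
      (\<Sum>j=1..?S R. h (Ridx N M n j)) + (\<Sum>j=?S R + 1..?S R + nn N M n (Suc R). h (Ridx N M n j))"
    unfolding SS by (rule sum.ub_add_nat) simp
  also have "(\<Sum>j=?S R + 1..?S R + nn N M n (Suc R). h (Ridx N M n j)) =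
       (\<Sum>j=?S R + 1..?S R + nn N M n (Suc R). h (Suc R))"
  proof (intro sum.cong refl)
    fix j assume j: "j \<in> {?S R + 1..?S R + nn N M n (Suc R)}"
    have "Ridx N M n j = Suc R"
      unfolding Ridx_def
    proof (rule Least_equality)
      show "j \<le> ?S (Suc R)" using j SS by simp
      fix y assume y: "j \<le> ?S y"
      show "Suc R \<le> y"
      proof (rule ccontr)
        assume "\<not> Suc R \<le> y"
        then have "?S y \<le> ?S R" using mono by simp
        then show False using j y by simp
      qed
    qed
    then show "h (Ridx N M n j) = h (Suc R)" by simp
  qed
  also have "\<dots> = natmult (nn N M n (Suc R)) (h (Suc R))"
    by (simp add: sum_const_natmult)
  finally show ?case using Suc by simp
qed


lemma SM: assumes hN: "N \<ge> (\<Sum>r=1..M. n r)" shows "(\<Sum>r=0..M. nn N M n r) = N"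
proof -
  have "(\<Sum>r=0..M. nn N M n r) = nn N M n 0 + (\<Sum>r=Suc 0..M. nn N M n r)"
    by (rule sum.atLeast_Suc_atMost) simp
  also have "(\<Sum>r=Suc 0..M. nn N M n r) = (\<Sum>r=1..M. n r)"
    by (intro sum.cong) (auto simp: nn_def)
  finally show ?thesis using hN by (simp add: nn_def)
qed

lemma Ridx_le: assumes hN: "N \<ge> (\<Sum>r=1..M. n r)" and "j \<le> N" shows "Ridx N M n j \<le> M"
  unfolding Ridx_def by (rule Least_le) (use SM[OF hN] assms(2) in simp)

lemma mem_X: assumes hN: "N \<ge> (\<Sum>r=1..M. n r)" and i: "i \<in> {1..N}"
  shows "(i, alpha_mod N M n as k) \<in> meas N M as"
proof -
  have N: "0 < N" using i by simp
  have "(k - 1) mod N + 1 \<le> N" using N mod_less_divisor[OF N, of "k - 1"] by linarith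
  then have "Ridx N M n ((k - 1) mod N + 1) \<le> M" using Ridx_le[OF hN] by blast
  then show ?thesis using i unfolding meas_def alpha_mod_def alpha_def by auto
qed

lemma ctx_sub: assumes hN: "N \<ge> (\<Sum>r=1..M. n r)" shows "ctx N M n as c \<subseteq> meas N M as"
proof
  fix x assume x: "x \<in> ctx N M n as c"
  show "x \<in> meas N M as"
  proof (cases c)
    case Control then show ?thesis using x by (auto simp: ctx_def meas_def)
  next
    case (Var v) then show ?thesis using x mem_X[OF hN] by (auto simp: ctx_def)
  qed
qed

lemma ctx_fin: "finite (ctx N M n as c)"
proof -
  have "ctx N M n as c = (\<lambda>i. (i, case c of Control \<Rightarrow> 0 | Var v \<Rightarrow> alpha_mod N M n as (i + v - 1))) ` {1..N}"
    by (auto simp: ctx_def split: mctx.splits)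
  then show ?thesis by simp
qed

lemma sum_ctx_Control: fixes as :: "nat \<Rightarrow> 'p::zero" shows "sum F (ctx N M n as Control) = (\<Sum>i=1..N. F (i, 0))"
proof -
  have e: "ctx N M n as Control = (\<lambda>i. (i, 0)) ` {1..N}" by (auto simp: ctx_def)
  have i: "inj_on (\<lambda>i. (i, 0::'p)) {1..N}" by (auto simp: inj_on_def)
  show ?thesis unfolding e sum.reindex[OF i] by (simp add: o_def)
qed

lemma sum_ctx_Var: "sum F (ctx N M n as (Var v)) = (\<Sum>i=1..N. F (i, alpha_mod N M n as (i + v - 1)))"
proof -
  have e: "ctx N M n as (Var v) = (\<lambda>i. (i, alpha_mod N M n as (i + v - 1))) ` {1..N}" by (auto simp: ctx_def)
  have i: "inj_on (\<lambda>i. (i, alpha_mod N M n as (i + v - 1))) {1..N}" by (auto simp: inj_on_def)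
  show ?thesis unfolding e sum.reindex[OF i] by (simp add: o_def)
qed

lemma key:
  fixes g :: "'p::zero \<Rightarrow> 'a::comm_monoid_add"
  assumes hN: "N \<ge> (\<Sum>r=1..M. n r)"
  shows "(\<Sum>j=1..N. g (alpha N M n as j)) = natmult (nn N M n 0) (g 0) + (\<Sum>r=1..M. natmult (n r) (g (as r)))"
proof -
  define h where "h r = (if r = 0 then g 0 else g (as r))" for r
  have "(\<Sum>j=1..N. g (alpha N M n as j)) = (\<Sum>j=1..(\<Sum>r=0..M. nn N M n r). h (Ridx N M n j))"
    unfolding SM[OF hN] by (intro sum.cong) (auto simp: h_def alpha_def)
  also have "\<dots> = (\<Sum>r=0..M. natmult (nn N M n r) (h r))" by (rule ridx_block)
  also have "\<dots> = natmult (nn N M n 0) (h 0) + (\<Sum>r=Suc 0..M. natmult (nn N M n r) (h r))"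
    by (rule sum.atLeast_Suc_atMost) simp
  also have "(\<Sum>r=Suc 0..M. natmult (nn N M n r) (h r)) = (\<Sum>r=1..M. natmult (n r) (g (as r)))"
    by (intro sum.cong) (auto simp: nn_def h_def)
  finally show ?thesis by (simp add: h_def)
qed

lemma p_pow: "bool_semiring_hom p \<Longrightarrow> p x \<Longrightarrow> p (x ^ m)"
  by (induct m) (auto simp: bool_semiring_hom_def)

lemma supp:
  assumes "bool_semiring_hom p" "p dinv"
  shows "support p K C (emp N M n as a dinv c) =
     {b \<in> C \<rightarrow>\<^sub>E K. sum b (ctx N M n as c) = (case c of Control \<Rightarrow> 0 | Var v \<Rightarrow> a)}"
proof -
  have p1: "p (dinv ^ (N - 1))" using p_pow[OF assms] .
  have p0: "\<not> p 0" using assms(1) unfolding bool_semiring_hom_def by simp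
  have "p (emp N M n as a dinv c b) \<longleftrightarrow> sum b (ctx N M n as c) = (case c of Control \<Rightarrow> 0 | Var v \<Rightarrow> a)" for b
    unfolding emp_def using p1 p0 by simp
  then show ?thesis unfolding support_def by simp
qed

lemma TZ_iff:
  fixes t :: "'p::ab_group_add"
  assumes "t \<in> K" "s \<in> C \<rightarrow>\<^sub>E K" and W: "W = {b \<in> C \<rightarrow>\<^sub>E K. sum b C = t}"
  shows "(\<forall>(nb, b)\<in>T_Z K C W. sat_eq C nb b s) \<longleftrightarrow> sum s C = t"
proof
  assume h: "\<forall>(nb, b)\<in>T_Z K C W. sat_eq C nb b s"
  have e0: "(\<Sum>m\<in>C. intmult (restrict (\<lambda>_. 1) C m) (w m)) = sum w C" for w :: "_ \<Rightarrow> 'p"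
    by (rule sum.cong) auto
  have e: "sat_eq C (restrict (\<lambda>_. 1) C) t w \<longleftrightarrow> sum w C = t" for w
    unfolding sat_eq_def e0 by simp
  have "(restrict (\<lambda>_. 1) C, t) \<in> T_Z K C W" using assms(1) unfolding T_Z_def W
    by (simp add: e)
  then have "sat_eq C (restrict (\<lambda>_. 1) C) t s" using h by fast
  then show "sum s C = t" using e by simp
next
  assume "sum s C = t"
  then have "s \<in> W" using assms(2) W by simp
  then show "\<forall>(nb, b)\<in>T_Z K C W. sat_eq C nb b s" unfolding T_Z_def by blast
qed


theorem mainTheorem2:
  fixes invol :: "'r::comm_semiring_1 \<Rightarrow> 'r"
    and p :: "'r \<Rightarrow> bool"
    and dinv :: 'r
    and K :: "'p::ab_group_add set"
    and M N :: nat
    and n :: "nat \<Rightarrow> nat"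
    and as :: "nat \<Rightarrow> 'p"
    and a :: 'p
  assumes "involutive_semiring invol"
    and "(0::'r) \<noteq> 1"
    and "finite K" and "is_subgroup K"
    and "of_nat (card K) * dinv = 1"
    and "bool_semiring_hom p" and "p dinv"
    and "\<forall>r\<in>{1..M}. 0 < n r"
    and "a \<in> K"
    and "(\<Sum>r=1..M. natmult (n r) (as r)) = a"
    and "inj_on as {1..M}"
    and "\<forall>r\<in>{1..M}. as r \<noteq> 0"
    and "N \<ge> (\<Sum>r=1..M. n r)"
    and "N mod group_exponent K = 1 mod group_exponent K"
  shows "AvN_ZK K (meas N M as) (ctxs N) (ctx N M n as) (emp N M n as a dinv) p
     \<longleftrightarrow> \<not> (\<exists>y. (\<forall>r\<in>{1..M}. y r \<in> K) \<and> (\<Sum>r=1..M. natmult (n r) (y r)) = a)"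
proof -
  note hN = assms(13)
  have K0: "0 \<in> K" using assms(4) unfolding is_subgroup_def by simp
  define X where "X = meas N M as"
  define tgt where "tgt c = (case c of Control \<Rightarrow> 0 | Var v \<Rightarrow> a)" for c
  have tgtK: "tgt c \<in> K" for c using K0 assms(9) by (simp add: tgt_def split: mctx.splits)
  have loc: "(\<forall>(nb, b)\<in>T_Z K (ctx N M n as c) (support p K (ctx N M n as c) (emp N M n as a dinv c)).
              sat_eq (ctx N M n as c) nb b (restrict s (ctx N M n as c)))
           \<longleftrightarrow> sum s (ctx N M n as c) = tgt c" if s: "s \<in> X \<rightarrow>\<^sub>E K" for s c
  proof -
    have sub: "ctx N M n as c \<subseteq> X" using ctx_sub[OF hN] X_def by simp
    have rs: "restrict s (ctx N M n as c) \<in> ctx N M n as c \<rightarrow>\<^sub>E K" using s sub by (auto simp: PiE_def Pi_def)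
    have sr: "sum (restrict s (ctx N M n as c)) (ctx N M n as c) = sum s (ctx N M n as c)"
      by (rule sum.cong) auto
    have W: "support p K (ctx N M n as c) (emp N M n as a dinv c) =
        {b \<in> ctx N M n as c \<rightarrow>\<^sub>E K. sum b (ctx N M n as c) = tgt c}"
      using supp[OF assms(6) assms(7)] unfolding tgt_def by simp
    show ?thesis using TZ_iff[OF tgtK rs W] sr by simp
  qed
  have avn: "AvN_ZK K (meas N M as) (ctxs N) (ctx N M n as) (emp N M n as a dinv) p \<longleftrightarrow>
      \<not> (\<exists>s\<in>X \<rightarrow>\<^sub>E K. \<forall>c\<in>ctxs N. sum s (ctx N M n as c) = tgt c)"
    unfolding AvN_ZK_def X_def[symmetric] using loc by auto
  show ?thesis unfolding avn
  proof (intro iffI notI; elim notE)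
    assume "\<exists>y. (\<forall>r\<in>{1..M}. y r \<in> K) \<and> (\<Sum>r=1..M. natmult (n r) (y r)) = a"
    then obtain y where yK: "\<forall>r\<in>{1..M}. y r \<in> K" and ya: "(\<Sum>r=1..M. natmult (n r) (y r)) = a" by blast
    define f where "f c = (if c \<in> as ` {1..M} then y (the_inv_into {1..M} as c) else 0)" for c
    have fa: "f (as r) = y r" if "r \<in> {1..M}" for r
      using the_inv_into_f_f[OF assms(11) that] that unfolding f_def by auto
    have fK: "f c \<in> K" for c
    proof (cases "c \<in> as ` {1..M}")
      case True then obtain r where "r \<in> {1..M}" "c = as r" by blast
      then show ?thesis using fa yK by simp
    next
      case False then show ?thesis using K0 by (simp add: f_def)
    qed
    have f0: "f 0 = 0" using assms(12) by (auto simp: f_def)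
    define s where "s = restrict (\<lambda>m. f (snd m)) X"
    have sX: "s \<in> X \<rightarrow>\<^sub>E K" using fK by (simp add: s_def)
    have "\<forall>c\<in>ctxs N. sum s (ctx N M n as c) = tgt c"
    proof
      fix c assume c: "c \<in> ctxs N"
      show "sum s (ctx N M n as c) = tgt c"
      proof (cases c)
        case Control
        have "sum s (ctx N M n as c) = (\<Sum>i=1..N. s (i, 0))" unfolding Control by (rule sum_ctx_Control)
        also have "\<dots> = (\<Sum>i=1..N. f 0)"
          by (rule sum.cong) (auto simp: s_def X_def meas_def)
        finally show ?thesis using f0 Control by (simp add: tgt_def)
      next
        case (Var v)
        then have v: "1 \<le> v" using c by (auto simp: ctxs_def)
        have "sum s (ctx N M n as c) = (\<Sum>i=1..N. s (i, alpha_mod N M n as (i + v - 1)))"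
          unfolding Var by (rule sum_ctx_Var)
        also have "\<dots> = (\<Sum>i=1..N. f (alpha_mod N M n as (i + v - 1)))"
          by (rule sum.cong) (auto simp: s_def X_def mem_X[OF hN])
        also have "\<dots> = (\<Sum>j=1..N. f (alpha N M n as j))" by (rule cyc1[OF v])
        also have "\<dots> = natmult (nn N M n 0) (f 0) + (\<Sum>r=1..M. natmult (n r) (f (as r)))"
          by (rule key[OF hN])
        also have "\<dots> = (\<Sum>r=1..M. natmult (n r) (y r))"
          using f0 fa by simp
        finally show ?thesis using ya Var by (simp add: tgt_def)
      qed
    qed
    then show "\<exists>s\<in>X \<rightarrow>\<^sub>E K. \<forall>c\<in>ctxs N. sum s (ctx N M n as c) = tgt c" using sX by blast
  next
    assume "\<exists>s\<in>X \<rightarrow>\<^sub>E K. \<forall>c\<in>ctxs N. sum s (ctx N M n as c) = tgt c"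
    then obtain s where sX: "s \<in> X \<rightarrow>\<^sub>E K" and hs: "\<forall>c\<in>ctxs N. sum s (ctx N M n as c) = tgt c" by blast
    have ctrl: "(\<Sum>i=1..N. s (i, 0)) = 0"
      using hs sum_ctx_Control[of s N M n as] by (simp add: ctxs_def tgt_def)
    have var: "(\<Sum>i=1..N. s (i, alpha_mod N M n as (i + v - 1))) = a" if "v \<in> {1..N}" for v
      using hs that sum_ctx_Var[of s N M n as v] by (simp add: ctxs_def tgt_def)
    define y where "y r = (\<Sum>i=1..N. s (i, as r))" for r
    have yK: "\<forall>r\<in>{1..M}. y r \<in> K"
    proof
      fix r assume r: "r \<in> {1..M}"
      have "s (i, as r) \<in> K" if "i \<in> {1..N}" for i
        using sX that r by (auto simp: X_def meas_def PiE_def Pi_def)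
      then show "y r \<in> K" unfolding y_def by (intro sum_in[OF assms(4)]) blast
    qed
    have "natmult N a = (\<Sum>v=1..N. a)" by (simp add: sum_const_natmult)
    also have "\<dots> = (\<Sum>v=1..N. \<Sum>i=1..N. s (i, alpha_mod N M n as (i + v - 1)))"
      using var by (intro sum.cong) auto
    also have "\<dots> = (\<Sum>i=1..N. \<Sum>v=1..N. s (i, alpha_mod N M n as (v + i - 1)))"
      by (subst sum.swap) (simp add: add.commute)
    also have "\<dots> = (\<Sum>i=1..N. \<Sum>j=1..N. s (i, alpha N M n as j))"
      by (intro sum.cong refl cyc1) auto
    also have "\<dots> = (\<Sum>i=1..N. natmult (nn N M n 0) (s (i, 0)) + (\<Sum>r=1..M. natmult (n r) (s (i, as r))))"
      by (intro sum.cong refl key[OF hN])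
    also have "\<dots> = natmult (nn N M n 0) (\<Sum>i=1..N. s (i, 0)) + (\<Sum>r=1..M. natmult (n r) (y r))"
      unfolding sum.distrib natmult_sum y_def by (subst sum.swap) simp
    also have "\<dots> = (\<Sum>r=1..M. natmult (n r) (y r))" using ctrl by simp
    finally have "(\<Sum>r=1..M. natmult (n r) (y r)) = a"
      using natmult_N[OF assms(3) assms(4) assms(9) assms(14)] by simp
    then show "\<exists>y. (\<forall>r\<in>{1..M}. y r \<in> K) \<and> (\<Sum>r=1..M. natmult (n r) (y r)) = a" using yK by blast
  qed
qed

end
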